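(* Let $A$ be a vector space of dimension $n\geq 2$ over $\mathbb F$, and let $f,g:A\to\mathbb F$ be linear functions. Define $\circ:A\otimes A\to A$ by $x\circ y=f(y)x+g(x)y$ for all $x,y\in A$. Then $(A,\circ)$ is an anti-pre-Lie algebra if and only if $f=0$ or $g=2f$.
   Context: All vector spaces are finite-dimensional over a field $\mathbb F$ of characteristic $0$. An anti-pre-Lie algebra is a vector space $A$ with a bilinear operation $\circ$ such that, writing $[x,y]=x\circ y-y\circ x$, for all $x,y,z\in A$: (i) $x\circ(y\circ z)-y\circ(x\circ z)=[y,x]\circ z$, and (ii) $[x,y]\circ z+[y,z]\circ x+[z,x]\circ y=0$. *)

theory Defs
  imports "HOL-Analysis.Analysis"
begin

definition commutator :: "('v::ab_group_add \<Rightarrow> 'v \<Rightarrow> 'v) \<Rightarrow> 'v \<Rightarrow> 'v \<Rightarrow> 'v" where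
  "commutator op x y = op x y - op y x"

definition anti_pre_Lie :: "('a::field \<Rightarrow> 'v::ab_group_add \<Rightarrow> 'v) \<Rightarrow> ('v \<Rightarrow> 'v \<Rightarrow> 'v) \<Rightarrow> bool" where
  "anti_pre_Lie sc op \<longleftrightarrow>
     (\<forall>x. Vector_Spaces.linear sc sc (op x)) \<and>
     (\<forall>y. Vector_Spaces.linear sc sc (\<lambda>x. op x y)) \<and>
     (\<forall>x y z. op x (op y z) - op y (op x z) = op (commutator op y x) z) \<and>
     (\<forall>x y z. op (commutator op x y) z + op (commutator op y z) x + op (commutator op z x) y = 0)"

end

theory Submission
  imports Defs
begin

lemma key_ids:
  fixes sc :: "'a::field_char_0 \<Rightarrow> 'v::ab_group_add \<Rightarrow> 'v"
    and f g :: "'v \<Rightarrow> 'a"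
  assumes vs: "vector_space sc"
    and fl: "Vector_Spaces.linear sc (*) f"
    and gl: "Vector_Spaces.linear sc (*) g"
  defines "op \<equiv> (\<lambda>x y. sc (f y) x + sc (g x) y)"
  shows I: "op x (op y z) - op y (op x z) - op (commutator op y x) z
     = sc (f z) (sc (f y + f y - g y) x - sc (f x + f x - g x) y) - sc (f x * g y - f y * g x) z"
   and II: "op (commutator op x y) z + op (commutator op y z) x + op (commutator op z x) y = 0"
proof -
  interpret V: vector_space sc by fact
  have fa: "\<And>x y. f (x + y) = f x + f y" "\<And>c x. f (sc c x) = c * f x"
    using fl unfolding Vector_Spaces.linear_iff by auto
  have ga: "\<And>x y. g (x + y) = g x + g y" "\<And>c x. g (sc c x) = c * g x"
    using gl unfolding Vector_Spaces.linear_iff by auto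
  have fd: "\<And>x y. f (x - y) = f x - f y"
    by (metis add_diff_cancel fa(1) eq_diff_eq)
  have gd: "\<And>x y. g (x - y) = g x - g y"
    by (metis add_diff_cancel ga(1) eq_diff_eq)
  have two: "\<And>a v. sc (a * 2) v = sc a v + sc a v" "\<And>a b v. sc (a * (b * 2)) v = sc (a * b) v + sc (a * b) v"
    by (simp_all add: V.scale_left_distrib[symmetric] algebra_simps)
  show "op x (op y z) - op y (op x z) - op (commutator op y x) z
     = sc (f z) (sc (f y + f y - g y) x - sc (f x + f x - g x) y) - sc (f x * g y - f y * g x) z"
    unfolding op_def commutator_def
    by (simp add: fa ga fd gd two V.scale_left_distrib V.scale_right_distrib V.scale_left_diff_distrib V.scale_right_diff_distrib algebra_simps)
  show "op (commutator op x y) z + op (commutator op y z) x + op (commutator op z x) y = 0"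
    unfolding op_def commutator_def
    by (simp add: fa ga fd gd V.scale_left_distrib V.scale_right_distrib V.scale_left_diff_distrib V.scale_right_diff_distrib algebra_simps)
qed

theorem proposition2p7:
  fixes sc :: "'a::field_char_0 \<Rightarrow> 'v::ab_group_add \<Rightarrow> 'v"
    and B :: "'v set"
    and f g :: "'v \<Rightarrow> 'a"
  assumes "finite_dimensional_vector_space sc B"
    and "card B \<ge> 2"
    and "Vector_Spaces.linear sc (*) f"
    and "Vector_Spaces.linear sc (*) g"
  shows "anti_pre_Lie sc (\<lambda>x y. sc (f y) x + sc (g x) y)
           \<longleftrightarrow> (f = (\<lambda>_. 0) \<or> g = (\<lambda>x. 2 * f x))"
proof -
  interpret V: finite_dimensional_vector_space sc B by fact
  have vs: "vector_space sc" by unfold_locales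
  have fa: "\<And>x y. f (x + y) = f x + f y" "\<And>c x. f (sc c x) = c * f x"
    using assms(3) unfolding Vector_Spaces.linear_iff by auto
  have ga: "\<And>x y. g (x + y) = g x + g y" "\<And>c x. g (sc c x) = c * g x"
    using assms(4) unfolding Vector_Spaces.linear_iff by auto
  define op where "op = (\<lambda>x y. sc (f y) x + sc (g x) y)"
  have II: "op (commutator op x y) z + op (commutator op y z) x + op (commutator op z x) y = 0" for x y z
    unfolding op_def by (rule key_ids(2)[OF vs assms(3,4)])
  have notone: "\<not> (\<forall>z. \<exists>a. z = sc a v)" for v
  proof
    assume h: "\<forall>z. \<exists>a. z = sc a v"
    have "B \<subseteq> V.span {v}" unfolding V.span_singleton using h by auto
    hence "card B \<le> card {v}"
      using V.independent_span_bound[of "{v}" B] V.independent_Basis by auto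
    thus False using assms(2) by simp
  qed
  have lin1: "Vector_Spaces.linear sc sc (op x)" for x
    unfolding Vector_Spaces.linear_iff op_def
    using vs by (simp add: fa ga V.scale_left_distrib V.scale_right_distrib algebra_simps)
  have lin2: "Vector_Spaces.linear sc sc (\<lambda>x. op x y)" for y
    unfolding Vector_Spaces.linear_iff op_def
    using vs by (simp add: fa ga V.scale_left_distrib V.scale_right_distrib algebra_simps)
  have eqv: "anti_pre_Lie sc op \<longleftrightarrow> (\<forall>x y z.
     sc (f z) (sc (f y + f y - g y) x - sc (f x + f x - g x) y) - sc (f x * g y - f y * g x) z = 0)"
  proof -
    have Ieq: "(op x (op y z) - op y (op x z) = op (commutator op y x) z) \<longleftrightarrow>
      sc (f z) (sc (f y + f y - g y) x - sc (f x + f x - g x) y) - sc (f x * g y - f y * g x) z = 0" for x y z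
      unfolding op_def by (subst eq_iff_diff_eq_0) (rule arg_cong[where f="\<lambda>t. t = 0"], rule key_ids(1)[OF vs assms(3,4)])
    show ?thesis unfolding anti_pre_Lie_def using lin1 lin2 II Ieq by simp
  qed
  show ?thesis
    unfolding op_def[symmetric] eqv
  proof
    assume H: "\<forall>x y z.
     sc (f z) (sc (f y + f y - g y) x - sc (f x + f x - g x) y) - sc (f x * g y - f y * g x) z = 0"
    show "f = (\<lambda>_. 0) \<or> g = (\<lambda>x. 2 * f x)"
    proof (cases "f = (\<lambda>_. 0)")
      case True then show ?thesis by simp
    next
      case False
      then obtain z0 where z0: "f z0 \<noteq> 0" by auto
      have W: "sc (f y + f y - g y) x = sc (f x + f x - g x) y" for x y
      proof -
        let ?w = "sc (f y + f y - g y) x - sc (f x + f x - g x) y"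
        let ?D = "f x * g y - f y * g x"
        have E: "sc (f z) ?w = sc ?D z" for z using H by (simp only: right_minus_eq)
        have "?D = 0"
        proof (rule ccontr)
          assume D: "?D \<noteq> 0"
          have "\<forall>z. \<exists>a. z = sc a ?w"
          proof
            fix z
            have "sc (inverse ?D * f z) ?w = z"
              using E[of z] D by (metis V.scale_scale V.scale_one left_inverse)
            thus "\<exists>a. z = sc a ?w" by metis
          qed
          thus False using notone by blast
        qed
        hence "sc (f z0) ?w = 0" using E[of z0] by simp
        hence "?w = 0" using z0 by simp
        thus ?thesis by simp
      qed
      have "g y = 2 * f y" for y
      proof (rule ccontr)
        assume "g y \<noteq> 2 * f y"
        hence k: "f y + f y - g y \<noteq> 0" by simp
        have "\<forall>x. \<exists>a. x = sc a y"
        proof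
          fix x
          have "sc (inverse (f y + f y - g y) * (f x + f x - g x)) y = x"
            using W[of y x] k by (metis V.scale_scale V.scale_one left_inverse)
          thus "\<exists>a. x = sc a y" by metis
        qed
        thus False using notone by blast
      qed
      hence "g = (\<lambda>x. 2 * f x)" by auto
      thus ?thesis by simp
    qed
  next
    assume "f = (\<lambda>_. 0) \<or> g = (\<lambda>x. 2 * f x)"
    thus "\<forall>x y z.
     sc (f z) (sc (f y + f y - g y) x - sc (f x + f x - g x) y) - sc (f x * g y - f y * g x) z = 0"
      by (auto simp: algebra_simps)
  qed
qed

end
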